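(* Let $f:2^V\to\mathbb{R}_+$ be nonnegative and let $g:2^V\to\mathbb{R}$ be defined by $g(S)=f(S)-f(\emptyset)$ for all $S\subseteq V$. Then: (i) $f(T)/f(S)\le g(T)/g(S)$ for all $S,T\subseteq V$ with $f(S)\le f(T)$ (whenever these quotients are defined); (ii) $g$ is nonnegative and monotone if $f$ is monotone; (iii) $g$ is supermodular if $f$ is supermodular; (iv) $g$ is $r$-decomposable if $f$ is monotone, supermodular and $r$-decomposable.
   Context: $V$ is a finite set. Supermodular: $h(A)+h(B)\le h(A\cup B)+h(A\cap B)$ for all $A,B$; monotone: $h(B)\le h(A)$ for $B\subseteq A$. A function $h$ on $2^V$ is $r$-decomposable if there exist subsets $V_1,\dots,V_m\subseteq V$ with $|V_i|\le r$ and nonnegative supermodular functions $h_i:2^{V_i}\to\mathbb{R}_+$ such that $h(S)=\sum_{i=1}^m h_i(S\cap V_i)$ for all $S\subseteq V$. *)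

theory Defs
  imports Complex_Main
begin

text \<open>Set functions on 2^V are modelled as functions on 'a set, only their values on subsets of V matter.\<close>

definition nonneg_on :: "'a set \<Rightarrow> ('a set \<Rightarrow> real) \<Rightarrow> bool" where
  "nonneg_on V h \<longleftrightarrow> (\<forall>S. S \<subseteq> V \<longrightarrow> 0 \<le> h S)"

definition supermodular_on :: "'a set \<Rightarrow> ('a set \<Rightarrow> real) \<Rightarrow> bool" where
  "supermodular_on V h \<longleftrightarrow>
     (\<forall>A B. A \<subseteq> V \<longrightarrow> B \<subseteq> V \<longrightarrow> h A + h B \<le> h (A \<union> B) + h (A \<inter> B))"

definition monotone_on_sets :: "'a set \<Rightarrow> ('a set \<Rightarrow> real) \<Rightarrow> bool" where
  "monotone_on_sets V h \<longleftrightarrow> (\<forall>A B. A \<subseteq> V \<longrightarrow> B \<subseteq> A \<longrightarrow> h B \<le> h A)"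

definition decomposable :: "'a set \<Rightarrow> nat \<Rightarrow> ('a set \<Rightarrow> real) \<Rightarrow> bool" where
  "decomposable V r h \<longleftrightarrow>
     (\<exists>(m::nat) (Vs :: nat \<Rightarrow> 'a set) (hs :: nat \<Rightarrow> 'a set \<Rightarrow> real).
        (\<forall>i<m. Vs i \<subseteq> V \<and> card (Vs i) \<le> r \<and>
               nonneg_on (Vs i) (hs i) \<and> supermodular_on (Vs i) (hs i)) \<and>
        (\<forall>S. S \<subseteq> V \<longrightarrow> h S = (\<Sum>i<m. hs i (S \<inter> Vs i))))"

end

theory Submission
  imports Defs
begin

lemma swap_lemma:
  fixes d :: "nat \<Rightarrow> 'a \<Rightarrow> real"
  assumes "finite S"
  shows "(\<Sum>i<m. \<Sum>v\<in>S \<inter> Vs i. d i v) = (\<Sum>v\<in>S. \<Sum>i\<in>{i. i<m \<and> v \<in> Vs i}. d i v)"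
proof -
  have "(\<Sum>i<m. \<Sum>v\<in>S \<inter> Vs i. d i v) = (\<Sum>i<m. \<Sum>v\<in>S. if v \<in> Vs i then d i v else 0)"
    by (rule sum.cong[OF refl]) (simp add: sum.If_cases assms Int_def)
  also have "\<dots> = (\<Sum>v\<in>S. \<Sum>i<m. if v \<in> Vs i then d i v else 0)"
    by (rule sum.swap)
  also have "\<dots> = (\<Sum>v\<in>S. \<Sum>i\<in>{i. i<m \<and> v \<in> Vs i}. d i v)"
  proof (rule sum.cong[OF refl])
    fix v
    have "{i. i<m \<and> v \<in> Vs i} = {..<m} \<inter> {i. v \<in> Vs i}" by auto
    then show "(\<Sum>i<m. if v \<in> Vs i then d i v else 0) = (\<Sum>i\<in>{i. i<m \<and> v \<in> Vs i}. d i v)"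
      by (simp add: sum.If_cases)
  qed
  finally show ?thesis .
qed

lemma superadd:
  fixes h :: "'a set \<Rightarrow> real"
  assumes "supermodular_on W h" "finite X" "X \<subseteq> W"
  shows "(\<Sum>v\<in>X. h {v} - h {}) \<le> h X - h {}"
  using assms(2,3)
proof (induction X rule: finite_induct)
  case empty then show ?case by simp
next
  case (insert x X)
  have "h X + h {x} \<le> h (X \<union> {x}) + h (X \<inter> {x})"
  proof -
    have "X \<subseteq> W" "{x} \<subseteq> W" using insert(4) by auto
    then show ?thesis using assms(1) unfolding supermodular_on_def by blast
  qed
  moreover have "X \<inter> {x} = {}" using insert by auto
  ultimately have "h X + h {x} \<le> h (insert x X) + h {}" by simp
  then show ?case using insert by simp
qed

lemma modular_sum:
  fixes c :: "'a \<Rightarrow> real"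
  assumes "finite A" "finite B"
  shows "(\<Sum>v\<in>A. c v) + (\<Sum>v\<in>B. c v) = (\<Sum>v\<in>A \<union> B. c v) + (\<Sum>v\<in>A \<inter> B. c v)"
  using sum.union_inter[OF assms, of c] by simp

lemma frac_le:
  fixes a b c d :: real
  assumes "0 < b" "0 < d" "a * d \<le> c * b"
  shows "a / b \<le> c / d"
  using assms by (simp add: divide_simps)

theorem proposition2:
  fixes V :: "'a set" and f g :: "'a set \<Rightarrow> real" and r :: nat
  assumes "finite V"
    and "nonneg_on V f"
    and "\<forall>S. S \<subseteq> V \<longrightarrow> g S = f S - f {}"
  shows "(\<forall>S T. S \<subseteq> V \<longrightarrow> T \<subseteq> V \<longrightarrow> f S \<le> f T \<longrightarrow> 0 < g S \<longrightarrow>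
            f T / f S \<le> g T / g S)
       \<and> (monotone_on_sets V f \<longrightarrow> nonneg_on V g \<and> monotone_on_sets V g)
       \<and> (supermodular_on V f \<longrightarrow> supermodular_on V g)
       \<and> (monotone_on_sets V f \<and> supermodular_on V f \<and> decomposable V r f
            \<longrightarrow> decomposable V r g)"
proof (intro conjI impI allI)
  have f0: "0 \<le> f {}" using assms(2) unfolding nonneg_on_def by auto
  fix S T assume ST: "S \<subseteq> V" "T \<subseteq> V" "f S \<le> f T" "0 < g S"
  let ?c = "f {}"
  have gS: "g S = f S - ?c" and gT: "g T = f T - ?c" using assms(3) ST by auto
  have pS: "0 < f S" using gS ST f0 by linarith
  have pT: "0 < g T" using gT gS ST by linarith
  have "f T * (f S - ?c) \<le> f S * (f T - ?c)"
    using ST(3) f0 by (simp add: algebra_simps mult_left_mono)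
  then have "f T * g S \<le> g T * f S" using gS gT by (simp add: mult.commute)
  then show "f T / f S \<le> g T / g S"
    using pS ST(4) by (rule frac_le[rotated 2])
next
  assume m: "monotone_on_sets V f"
  show "nonneg_on V g" using m assms(3) unfolding nonneg_on_def monotone_on_sets_def by auto
  show "monotone_on_sets V g" unfolding monotone_on_sets_def
  proof (intro allI impI)
    fix A B assume "A \<subseteq> V" "B \<subseteq> A"
    moreover then have "B \<subseteq> V" by auto
    ultimately show "g B \<le> g A" using m assms(3) unfolding monotone_on_sets_def by simp
  qed
next
  assume "supermodular_on V f"
  then show "supermodular_on V g" using assms(3) unfolding supermodular_on_def
  proof (intro allI impI)
    fix A B assume a: "\<forall>A B. A \<subseteq> V \<longrightarrow> B \<subseteq> V \<longrightarrow> f A + f B \<le> f (A \<union> B) + f (A \<inter> B)"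
      "A \<subseteq> V" "B \<subseteq> V"
    then have "A \<union> B \<subseteq> V" "A \<inter> B \<subseteq> V" by auto
    then have "g (A \<union> B) = f (A \<union> B) - f {}" "g (A \<inter> B) = f (A \<inter> B) - f {}"
      "g A = f A - f {}" "g B = f B - f {}" using a(2,3) assms(3) by auto
    moreover have "f A + f B \<le> f (A \<union> B) + f (A \<inter> B)" using a by blast
    ultimately show "g A + g B \<le> g (A \<union> B) + g (A \<inter> B)" by linarith
  qed
next
  assume H: "monotone_on_sets V f \<and> supermodular_on V f \<and> decomposable V r f"
  have gnn: "0 \<le> g {v}" if "v \<in> V" for v
  proof -
    have "{v} \<subseteq> V" using that by blast
    then have "f {} \<le> f {v}" "g {v} = f {v} - f {}" using H assms(3) unfolding monotone_on_sets_def by blast+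
    then show ?thesis by linarith
  qed
  from H have "decomposable V r f" by (elim conjE)
  then obtain m :: nat and Vs :: "nat \<Rightarrow> 'a set" and hs :: "nat \<Rightarrow> 'a set \<Rightarrow> real" where DE: "(\<forall>i<m. Vs i \<subseteq> V \<and> card (Vs i) \<le> r \<and>
               nonneg_on (Vs i) (hs i) \<and> supermodular_on (Vs i) (hs i)) \<and>
    (\<forall>S. S \<subseteq> V \<longrightarrow> f S = (\<Sum>i<m. hs i (S \<inter> Vs i)))"
    unfolding decomposable_def by blast
  from DE have D: "\<forall>i<m. Vs i \<subseteq> V \<and> card (Vs i) \<le> r \<and>
               nonneg_on (Vs i) (hs i) \<and> supermodular_on (Vs i) (hs i)" by (rule conjunct1)
  from DE have E: "\<forall>S. S \<subseteq> V \<longrightarrow> f S = (\<Sum>i<m. hs i (S \<inter> Vs i))" by (rule conjunct2)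
  define n where "n v = card {i. i<m \<and> v \<in> Vs i}" for v
  define hs' where "hs' i X = hs i X - hs i {} - (\<Sum>v\<in>X. hs i {v} - hs i {}) + (\<Sum>v\<in>X. g {v} / n v)" for i X
  have gE: "g S = (\<Sum>i<m. hs i (S \<inter> Vs i) - hs i {})" if "S \<subseteq> V" for S
  proof -
    have "f {} = (\<Sum>i<m. hs i ({} \<inter> Vs i))" using E by blast
    then have f0: "f {} = (\<Sum>i<m. hs i {})" by simp
    have "g S = f S - f {}" using assms(3) that by blast
    also have "f S = (\<Sum>i<m. hs i (S \<inter> Vs i))" using E that by blast
    finally show ?thesis unfolding f0 by (simp only: sum_subtractf)
  qed
  have gv: "g {v} = (\<Sum>i\<in>{i. i<m \<and> v \<in> Vs i}. hs i {v} - hs i {})" if "v \<in> V" for v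
  proof -
    have "{v} \<subseteq> V" using that by blast
    then have "g {v} = (\<Sum>i<m. hs i ({v} \<inter> Vs i) - hs i {})" by (rule gE)
    also have "\<dots> = (\<Sum>i<m. if v \<in> Vs i then hs i {v} - hs i {} else 0)"
      by (rule sum.cong) auto
    also have "\<dots> = (\<Sum>i\<in>{..<m} \<inter> {i. v \<in> Vs i}. hs i {v} - hs i {})"
      by (simp add: sum.If_cases)
    also have "{..<m} \<inter> {i. v \<in> Vs i} = {i. i<m \<and> v \<in> Vs i}" by auto
    finally show ?thesis .
  qed
  have gn: "(\<Sum>i\<in>{i. i<m \<and> v \<in> Vs i}. g {v} / n v) = g {v}" if "v \<in> V" for v
  proof (cases "n v = 0")
    case True
    have fin: "finite {i. i<m \<and> v \<in> Vs i}" by auto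
    then have e: "{i. i<m \<and> v \<in> Vs i} = {}" using True unfolding n_def by (simp only: card_0_eq)
    have "g {v} = (\<Sum>i\<in>{i. i<m \<and> v \<in> Vs i}. hs i {v} - hs i {})" by (rule gv[OF that])
    also have "\<dots> = 0" unfolding e by (rule sum.empty)
    finally have g0: "g {v} = 0" .
    show ?thesis unfolding e sum.empty g0 ..
  next
    case False
    have c: "card {i. i<m \<and> v \<in> Vs i} = n v" unfolding n_def ..
    have "(\<Sum>i\<in>{i. i<m \<and> v \<in> Vs i}. g {v} / n v) = real (card {i. i<m \<and> v \<in> Vs i}) * (g {v} / n v)"
      by (rule sum_constant)
    also have "\<dots> = g {v}" unfolding c using False by simp
    finally show ?thesis .
  qed
  show "decomposable V r g"
    unfolding decomposable_def
  proof (rule exI[of _ m], rule exI[of _ Vs], rule exI[of _ hs'], intro conjI allI impI)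
    fix i assume i: "i < m"
    have Vi: "Vs i \<subseteq> V" "card (Vs i) \<le> r" "nonneg_on (Vs i) (hs i)" "supermodular_on (Vs i) (hs i)"
      using D i by auto
    show "Vs i \<subseteq> V" "card (Vs i) \<le> r" using Vi by auto
    show "nonneg_on (Vs i) (hs' i)"
      unfolding nonneg_on_def
    proof (intro allI impI)
      fix X assume X: "X \<subseteq> Vs i"
      have "X \<subseteq> V" using X Vi(1) by (rule subset_trans)
      then have finX: "finite X" using assms(1) by (rule finite_subset)
      have "(\<Sum>v\<in>X. hs i {v} - hs i {}) \<le> hs i X - hs i {}"
        using superadd[OF Vi(4) finX X] .
      moreover have "0 \<le> (\<Sum>v\<in>X. g {v} / n v)"
      proof (rule sum_nonneg)
        fix v assume "v \<in> X"
        then have "v \<in> V" using X Vi(1) by blast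
        then have "0 \<le> g {v}" by (rule gnn)
        then show "0 \<le> g {v} / real (n v)" by simp
      qed
      ultimately show "0 \<le> hs' i X" unfolding hs'_def by linarith
    qed
    show "supermodular_on (Vs i) (hs' i)"
      unfolding supermodular_on_def
    proof (intro allI impI)
      fix A B assume AB: "A \<subseteq> Vs i" "B \<subseteq> Vs i"
      have "A \<subseteq> V" "B \<subseteq> V" using AB Vi(1) by blast+
      then have fA: "finite A" and fB: "finite B" using assms(1) finite_subset by blast+
      have "hs i A + hs i B \<le> hs i (A \<union> B) + hs i (A \<inter> B)"
        using Vi(4) AB unfolding supermodular_on_def by auto
      moreover note modular_sum[OF fA fB, of "\<lambda>v. hs i {v} - hs i {}"]
      moreover note modular_sum[OF fA fB, of "\<lambda>v. g {v} / n v"]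
      ultimately show "hs' i A + hs' i B \<le> hs' i (A \<union> B) + hs' i (A \<inter> B)"
        unfolding hs'_def by linarith
    qed
  next
    fix S assume S: "S \<subseteq> V"
    have finS: "finite S" using S assms(1) by (rule finite_subset)
    have "(\<Sum>i<m. hs' i (S \<inter> Vs i)) = (\<Sum>i<m. hs i (S \<inter> Vs i) - hs i {})
        - (\<Sum>i<m. \<Sum>v\<in>S \<inter> Vs i. hs i {v} - hs i {}) + (\<Sum>i<m. \<Sum>v\<in>S \<inter> Vs i. g {v} / n v)"
      unfolding hs'_def by (simp add: sum.distrib sum_subtractf)
    also have "\<dots> = g S - (\<Sum>v\<in>S. g {v}) + (\<Sum>v\<in>S. g {v})"
    proof -
      have e1: "(\<Sum>v\<in>S. \<Sum>i\<in>{i. i<m \<and> v \<in> Vs i}. hs i {v} - hs i {}) = (\<Sum>v\<in>S. g {v})"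
        using gv S by (intro sum.cong) auto
      have e2: "(\<Sum>v\<in>S. \<Sum>i\<in>{i. i<m \<and> v \<in> Vs i}. g {v} / n v) = (\<Sum>v\<in>S. g {v})"
        using gn S by (intro sum.cong) auto
      show ?thesis unfolding swap_lemma[OF finS] e1 e2 gE[OF S] ..
    qed
    finally show "g S = (\<Sum>i<m. hs' i (S \<inter> Vs i))" by simp
  qed
qed

end
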